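(* There exist absolute constants $c>0$ and $n_0$ such that for every $n\ge n_0$ and every $p$ with $1-\frac{1}{10n}\le p\le 1$, if $G\sim G(n,p)$ then $$\mathbb{P}(G\text{ is even-decomposable})\le e^{-cn}.$$
   Context: $G(n,p)$ is the binomial random graph on $n$ labelled vertices in which each pair is an edge independently with probability $p$. A graph $H$ is even-decomposable if there is a sequence $V(H)=V_0\supset V_1\supset\cdots\supset V_k=\emptyset$ such that for each $0\le i\le k-1$, the induced subgraph $H[V_i]$ has an even number of edges and $V_i\setminus V_{i+1}$ is an independent set in $H$. *)

theory Defs
  imports Complex_Main
begin

text \<open>Simple graphs on the vertex set {0..<n}: an edge is a 2-element set {i,j}.
  A graph is a set of such edges.\<close>

definition all_edges :: "nat \<Rightarrow> nat set set" where
  "all_edges n = {e. \<exists>i j. i < j \<and> j < n \<and> e = {i, j}}"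

definition induced_edges :: "nat set set \<Rightarrow> nat set \<Rightarrow> nat set set" where
  "induced_edges E S = {e \<in> E. e \<subseteq> S}"

definition independent_set :: "nat set set \<Rightarrow> nat set \<Rightarrow> bool" where
  "independent_set E S \<longleftrightarrow> (\<forall>e\<in>E. \<not> e \<subseteq> S)"

definition even_decomposable :: "nat set \<Rightarrow> nat set set \<Rightarrow> bool" where
  "even_decomposable V E \<longleftrightarrow>
     (\<exists>(k::nat) (Vs :: nat \<Rightarrow> nat set). Vs 0 = V \<and> Vs k = {} \<and>
        (\<forall>i<k. Vs (Suc i) \<subset> Vs i \<and>
               even (card (induced_edges E (Vs i))) \<and>
               independent_set E (Vs i - Vs (Suc i))))"

text \<open>Probability that G(n,p) (on vertex set {0..<n}) has property P:
  each of the n choose 2 pairs is an edge independently with probability p.\<close>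
definition gnp_prob :: "nat \<Rightarrow> real \<Rightarrow> (nat set set \<Rightarrow> bool) \<Rightarrow> real" where
  "gnp_prob n p P =
     (\<Sum>E\<in>Pow (all_edges n). if P E
        then p ^ card E * (1 - p) ^ (card (all_edges n) - card E) else 0)"

end

theory Submission
  imports Defs
begin

lemma pow_sum:
  fixes x y :: real
  assumes "finite A"
  shows "(\<Sum>E\<in>Pow A. x ^ card E * y ^ card (A - E)) = (x + y) ^ card A"
  using assms
proof (induction A rule: finite_induct)
  case empty
  then show ?case by simp
next
  case (insert a A)
  have disj: "Pow A \<inter> insert a ` Pow A = {}" using insert by auto
  have inj: "inj_on (insert a) (Pow A)"
  proof (rule inj_onI)
    fix X Y assume XY: "X \<in> Pow A" "Y \<in> Pow A" "insert a X = insert a Y"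
    then have "a \<notin> X" "a \<notin> Y" using insert by auto
    then show "X = Y" using XY(3) by (metis Diff_insert_absorb)
  qed
  have s1: "(\<Sum>E\<in>Pow A. x ^ card E * y ^ card (insert a A - E))
      = y * (\<Sum>E\<in>Pow A. x ^ card E * y ^ card (A - E))"
    unfolding sum_distrib_left
  proof (rule sum.cong[OF refl])
    fix E assume "E \<in> Pow A"
    then have "insert a A - E = insert a (A - E)" "a \<notin> A - E" using insert by auto
    moreover have "finite (A - E)" using insert by auto
    ultimately show "x ^ card E * y ^ card (insert a A - E) = y * (x ^ card E * y ^ card (A - E))"
      by simp
  qed
  have s2: "(\<Sum>E\<in>insert a ` Pow A. x ^ card E * y ^ card (insert a A - E))
      = x * (\<Sum>E\<in>Pow A. x ^ card E * y ^ card (A - E))"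
    unfolding sum_distrib_left sum.reindex[OF inj] o_def
  proof (rule sum.cong[OF refl])
    fix E assume "E \<in> Pow A"
    then have "insert a A - insert a E = A - E" "a \<notin> E" "finite E" using insert
      by (auto intro: finite_subset)
    then show "x ^ card (insert a E) * y ^ card (insert a A - insert a E) = x * (x ^ card E * y ^ card (A - E))"
      by simp
  qed
  have "(\<Sum>E\<in>Pow (insert a A). x ^ card E * y ^ card (insert a A - E))
     = (\<Sum>E\<in>Pow A. x ^ card E * y ^ card (insert a A - E))
     + (\<Sum>E\<in>insert a ` Pow A. x ^ card E * y ^ card (insert a A - E))"
    unfolding Pow_insert using disj insert by (intro sum.union_disjoint) auto
  also have "\<dots> = (x + y) * (x + y) ^ card A" using s1 s2 insert by (simp add: algebra_simps)
  finally show ?case using insert by simp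
qed

definition univ_set :: "nat \<Rightarrow> nat set set \<Rightarrow> nat set" where
  "univ_set n E = {u. u < n \<and> (\<forall>v<n. v \<noteq> u \<longrightarrow> {u, v} \<in> E)}"

lemma finite_all_edges: "finite (all_edges n)"
proof -
  have "all_edges n \<subseteq> Pow {0..<n}" unfolding all_edges_def by auto
  then show ?thesis by (rule finite_subset) simp
qed

lemma card_all_edges: "card (all_edges n) \<le> n * n"
proof -
  have "all_edges n \<subseteq> (\<lambda>(i,j). {i,j}) ` ({0..<n} \<times> {0..<n})"
    unfolding all_edges_def by force
  then have "card (all_edges n) \<le> card ((\<lambda>(i,j). {i,j}) ` ({0..<n} \<times> {0..<n}))"
    by (intro card_mono) auto
  also have "\<dots> \<le> card ({0..<n} \<times> {0..<n})" by (rule card_image_le) simp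
  finally show ?thesis by (simp add: card_cartesian_product)
qed

lemma remove_univ:
  assumes E: "E \<subseteq> all_edges n" and fin: "finite S" and u: "u \<in> S"
    and univ: "\<forall>v\<in>S. v \<noteq> u \<longrightarrow> {u, v} \<in> E"
  shows "card (induced_edges E S) = card (induced_edges E (S - {u})) + (card S - 1)"
proof -
  have eq: "induced_edges E S = induced_edges E (S - {u}) \<union> (\<lambda>v. {u, v}) ` (S - {u})"
  proof (rule set_eqI, rule iffI)
    fix e assume "e \<in> induced_edges E S"
    then have eE: "e \<in> E" and eS: "e \<subseteq> S" unfolding induced_edges_def by auto
    obtain i j where ij: "i < j" "e = {i, j}" using E eE unfolding all_edges_def by blast
    show "e \<in> induced_edges E (S - {u}) \<union> (\<lambda>v. {u, v}) ` (S - {u})"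
    proof (cases "u \<in> e")
      case True
      then have "e = {u, j} \<and> j \<in> S - {u} \<or> e = {u, i} \<and> i \<in> S - {u}" using ij eS by auto
      then show ?thesis by blast
    next
      case False
      then show ?thesis using eE eS unfolding induced_edges_def by auto
    qed
  next
    fix e assume "e \<in> induced_edges E (S - {u}) \<union> (\<lambda>v. {u, v}) ` (S - {u})"
    then show "e \<in> induced_edges E S" using univ u unfolding induced_edges_def by auto
  qed
  have fin1: "finite (induced_edges E (S - {u}))"
  proof -
    have "induced_edges E (S - {u}) \<subseteq> Pow S" unfolding induced_edges_def by auto
    then show ?thesis using fin by (meson finite_Pow_iff finite_subset)
  qed
  have disj: "induced_edges E (S - {u}) \<inter> (\<lambda>v. {u, v}) ` (S - {u}) = {}"
    unfolding induced_edges_def by auto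
  have inj: "inj_on (\<lambda>v. {u, v}) (S - {u})" by (auto simp: inj_on_def doubleton_eq_iff)
  have "card (induced_edges E S) = card (induced_edges E (S - {u})) + card ((\<lambda>v. {u, v}) ` (S - {u}))"
    unfolding eq using fin fin1 disj by (intro card_Un_disjoint) auto
  also have "card ((\<lambda>v. {u, v}) ` (S - {u})) = card S - 1"
    using card_image[OF inj] fin u by simp
  finally show ?thesis .
qed

lemma induced_empty: "E \<subseteq> all_edges n \<Longrightarrow> induced_edges E {} = {}"
  unfolding induced_edges_def all_edges_def by auto

lemma single_step:
  assumes "S \<subseteq> {0..<n}" "T \<subset> S" "independent_set E (S - T)"
    "(S - T) \<inter> ({0..<n} - univ_set n E) = {}"
  shows "\<exists>u\<in>univ_set n E. S = insert u T \<and> u \<notin> T"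
proof -
  obtain u where u: "u \<in> S - T" using assms(2) by blast
  have uU: "u \<in> univ_set n E" using u assms(1,4) by auto
  have "S - T = {u}"
  proof (rule ccontr)
    assume "S - T \<noteq> {u}"
    then obtain v where v: "v \<in> S - T" "v \<noteq> u" using u by blast
    then have "{u, v} \<in> E" using uU assms(1) unfolding univ_set_def by auto
    moreover have "{u, v} \<subseteq> S - T" using u v by auto
    ultimately show False using assms(3) unfolding independent_set_def by blast
  qed
  then show ?thesis using uU assms(2) by blast
qed

lemma decomp_count:
  assumes E: "E \<subseteq> all_edges n"
  shows "Vs 0 = S \<Longrightarrow> Vs k = {} \<Longrightarrow>
    (\<forall>i<k. Vs (Suc i) \<subset> Vs i \<and> even (card (induced_edges E (Vs i))) \<and>
        independent_set E (Vs i - Vs (Suc i))) \<Longrightarrow> S \<subseteq> {0..<n} \<Longrightarrow>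
    card (S \<inter> univ_set n E) \<le> card (S \<inter> ({0..<n} - univ_set n E)) + 1 \<and>
    (0 < k \<and> (S - Vs 1) \<inter> ({0..<n} - univ_set n E) \<noteq> {} \<longrightarrow>
       card (S \<inter> univ_set n E) \<le> card (S \<inter> ({0..<n} - univ_set n E)))"
proof (induction k arbitrary: S Vs)
  case 0
  then show ?case by simp
next
  case (Suc k)
  define U where "U = univ_set n E"
  define W where "W = {0..<n} - U"
  have UW: "U \<inter> W = {}" unfolding W_def by auto
  note prems = Suc.prems
  note cond = prems(3)
  have c0: "Vs 1 \<subset> S" "even (card (induced_edges E S))" "independent_set E (S - Vs 1)"
    using cond[rule_format, of 0] prems(1) by auto
  have IH: "card (Vs 1 \<inter> U) \<le> card (Vs 1 \<inter> W) + 1 \<and>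
    (0 < k \<and> (Vs 1 - Vs 2) \<inter> W \<noteq> {} \<longrightarrow> card (Vs 1 \<inter> U) \<le> card (Vs 1 \<inter> W))"
    using Suc.IH[of "\<lambda>i. Vs (Suc i)" "Vs 1"] prems cond c0 unfolding U_def W_def
    by (auto simp: numeral_2_eq_2)
  have finS: "finite S" using prems(4) finite_subset by blast
  have fin1: "finite (Vs 1)" using c0(1) finS finite_subset by blast
  show ?case
  proof (cases "(S - Vs 1) \<inter> W = {}")
    case False
    have D0U: "(S - Vs 1) \<inter> U = {}"
    proof (rule ccontr)
      assume "(S - Vs 1) \<inter> U \<noteq> {}"
      then obtain u where u: "u \<in> S - Vs 1" "u \<in> U" by blast
      obtain w where w: "w \<in> S - Vs 1" "w \<in> W" using False by blast
      have "w \<noteq> u" using u w UW by auto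
      then have "{u, w} \<in> E" using u w prems(4) unfolding U_def univ_set_def by auto
      moreover have "{u, w} \<subseteq> S - Vs 1" using u w by auto
      ultimately show False using c0(3) unfolding independent_set_def by blast
    qed
    have "S \<inter> U = Vs 1 \<inter> U" using D0U c0(1) by auto
    moreover have "card (S \<inter> W) \<ge> card (Vs 1 \<inter> W) + 1"
    proof -
      have "Vs 1 \<inter> W \<subset> S \<inter> W" using False c0(1) by auto
      moreover have "finite (S \<inter> W)" using finS by simp
      ultimately have "card (Vs 1 \<inter> W) < card (S \<inter> W)" by (simp add: psubset_card_mono)
      then show ?thesis by simp
    qed
    ultimately show ?thesis using IH unfolding U_def W_def by auto
  next
    case True
    note D0W = True
    obtain u where u: "u \<in> U" "S = insert u (Vs 1)" "u \<notin> Vs 1"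
      using single_step[OF prems(4) c0(1) c0(3)] True unfolding U_def W_def by auto
    have uW: "u \<notin> W" using u UW by auto
    have SU: "card (S \<inter> U) = card (Vs 1 \<inter> U) + 1" using u fin1 by simp
    have SW: "S \<inter> W = Vs 1 \<inter> W" using u uW by auto
    have key: "card (Vs 1 \<inter> U) \<le> card (Vs 1 \<inter> W)"
    proof (cases k)
      case 0
      then have "Vs 1 = {}" using prems(2) by simp
      then show ?thesis by simp
    next
      case (Suc k')
      note kk = this
      have c1: "Vs 2 \<subset> Vs 1" "even (card (induced_edges E (Vs 1)))" "independent_set E (Vs 1 - Vs 2)"
        using cond[rule_format, of 1] Suc by (auto simp: numeral_2_eq_2)
      have e2: "even (card (induced_edges E (Vs 2)))"
      proof (cases k')
        case 0
        then have "Vs 2 = {}" using \<open>k = Suc k'\<close> prems(2)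
          by (simp add: numeral_2_eq_2)
        then show ?thesis using induced_empty[OF E] by simp
      next
        case (Suc k'')
        then show ?thesis using cond[rule_format, of 2] kk by (simp add: numeral_2_eq_2)
      qed
      show ?thesis
      proof (cases "(Vs 1 - Vs 2) \<inter> W = {}")
        case False
        then show ?thesis using IH Suc by simp
      next
        case True
        have V1sub: "Vs 1 \<subseteq> {0..<n}" using c0(1) prems(4) by auto
        obtain w where w: "w \<in> U" "Vs 1 = insert w (Vs 2)" "w \<notin> Vs 2"
          using single_step[OF V1sub c1(1) c1(3)] True unfolding U_def W_def by auto
        have r1: "card (induced_edges E S) = card (induced_edges E (S - {u})) + (card S - 1)"
          apply (rule remove_univ[OF E finS])
          using u prems(4) unfolding U_def univ_set_def by auto
        have r2: "card (induced_edges E (Vs 1)) = card (induced_edges E (Vs 1 - {w})) + (card (Vs 1) - 1)"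
          apply (rule remove_univ[OF E fin1])
          using w V1sub unfolding U_def univ_set_def by auto
        have "S - {u} = Vs 1" using u by auto
        moreover have "Vs 1 - {w} = Vs 2" using w by auto
        moreover have "card S = card (Vs 1) + 1" using u fin1 by simp
        moreover have "card (Vs 1) \<ge> 1" using w fin1 by (simp add: card_gt_0_iff Suc_leI)
        ultimately have a1: "card (induced_edges E S) = card (induced_edges E (Vs 1)) + card (Vs 1)"
            and a2: "card (induced_edges E (Vs 1)) = card (induced_edges E (Vs 2)) + (card (Vs 1) - 1)"
            and a3: "card (Vs 1) \<ge> 1"
          using r1 r2 by auto
        have "even (card (Vs 1))" using a1 c0(2) c1(2) by simp
        moreover have "even (card (Vs 1) - 1)" using a2 c1(2) e2 by simp
        ultimately have False using a3 by (simp add: even_diff_nat)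
        then show ?thesis ..
      qed
    qed
    show ?thesis using SU SW key D0W unfolding U_def W_def by simp
  qed
qed


lemma comb:
  assumes E: "E \<subseteq> all_edges n" and ed: "even_decomposable {0..<n} E"
  shows "n \<le> 4 * card (all_edges n - E) + 1"
proof -
  define U where "U = univ_set n E"
  define W where "W = {0..<n} - U"
  obtain k Vs where Vs: "Vs 0 = {0..<n}" "Vs k = {}"
    "\<forall>i<k. Vs (Suc i) \<subset> Vs i \<and> even (card (induced_edges E (Vs i))) \<and>
        independent_set E (Vs i - Vs (Suc i))"
    using ed unfolding even_decomposable_def by blast
  have c1: "card ({0..<n} \<inter> U) \<le> card ({0..<n} \<inter> W) + 1"
    using decomp_count[OF E Vs] unfolding U_def W_def by auto
  have "{0..<n} \<inter> W = W" unfolding W_def by auto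
  with c1 have "card ({0..<n} \<inter> U) \<le> card W + 1" by simp
  moreover have "n = card ({0..<n} \<inter> U) + card W"
  proof -
    have "{0..<n} = ({0..<n} \<inter> U) \<union> W" unfolding W_def by auto
    moreover have "card (({0..<n} \<inter> U) \<union> W) = card ({0..<n} \<inter> U) + card W"
      by (rule card_Un_disjoint) (auto simp: W_def)
    ultimately have "card {0..<n} = card ({0..<n} \<inter> U) + card W" by simp
    then show ?thesis by simp
  qed
  moreover have "card W \<le> 2 * card (all_edges n - E)"
  proof -
    define M where "M = all_edges n - E"
    have finM: "finite M" unfolding M_def using finite_all_edges by simp
    have "W \<subseteq> \<Union>M"
    proof
      fix w assume "w \<in> W"
      then have w: "w < n" "\<not> (\<forall>v<n. v \<noteq> w \<longrightarrow> {w, v} \<in> E)"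
        unfolding W_def U_def univ_set_def by auto
      then obtain v where v: "v < n" "v \<noteq> w" "{w, v} \<notin> E" by blast
      have "{w, v} \<in> all_edges n"
      proof (cases "w < v")
        case True then show ?thesis unfolding all_edges_def using v by blast
      next
        case False then have "v < w" using v by simp
        have "{w, v} = {v, w}" by auto
        then show ?thesis unfolding all_edges_def using w \<open>v < w\<close> by blast
      qed
      then show "w \<in> \<Union>M" unfolding M_def using v by blast
    qed
    then have "card W \<le> card (\<Union>M)" using finM finite_all_edges
      by (intro card_mono) (auto simp: M_def all_edges_def)
    also have "\<dots> \<le> sum card M" by (rule card_Union_le_sum_card)
    also have "sum card M = sum (\<lambda>_. 2) M"
      by (rule sum.cong) (auto simp: M_def all_edges_def)
    finally show ?thesis unfolding M_def by simp
  qed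
  ultimately show ?thesis by linarith
qed

theorem mainTheorem3:
  shows "\<exists>c::real. c > 0 \<and> (\<exists>n0::nat. \<forall>n\<ge>n0. \<forall>p::real.
           1 - 1 / (10 * real n) \<le> p \<and> p \<le> 1 \<longrightarrow>
           gnp_prob n p (\<lambda>E. even_decomposable {0..<n} E) \<le> exp (- c * real n))"
proof (intro exI conjI allI impI)
  show "(1/40::real) > 0" by simp
  fix n :: nat and p :: real
  assume n: "10 \<le> n" and p: "1 - 1 / (10 * real n) \<le> p \<and> p \<le> 1"
  define A where "A = all_edges n"
  define N where "N = card A"
  define q where "q = 1 - p"
  have finA: "finite A" unfolding A_def by (rule finite_all_edges)
  have q0: "0 \<le> q" and q1: "q \<le> 1 / (10 * real n)" using p unfolding q_def by auto
  have "1 / (10 * real n) \<le> 1" using n by (simp add: field_simps)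
  then have p0: "0 \<le> p" using p by linarith
  define a where "a = exp (- (real n - 1) / 4)"
  have hterm: "(if even_decomposable {0..<n} E then p ^ card E * (1 - p) ^ (card A - card E) else 0)
      \<le> a * (p ^ card E * (exp 1 * q) ^ card (A - E))" if "E \<in> Pow A" for E
  proof -
    have cd: "card A - card E = card (A - E)" using that finA
      by (simp add: card_Diff_subset finite_subset)
    have w0: "0 \<le> p ^ card E * q ^ card (A - E)" using p0 q0 by simp
    have rhs: "a * (p ^ card E * (exp 1 * q) ^ card (A - E))
        = (a * exp 1 ^ card (A - E)) * (p ^ card E * q ^ card (A - E))"
      by (simp add: power_mult_distrib)
    show ?thesis
    proof (cases "even_decomposable {0..<n} E")
      case True
      have "n \<le> 4 * card (A - E) + 1" using comb[OF _ True] that unfolding A_def by auto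
      then have "real n - 1 \<le> 4 * real (card (A - E))" by linarith
      then have "0 \<le> real (card (A - E)) - (real n - 1) / 4" by simp
      then have "1 \<le> exp (real (card (A - E)) - (real n - 1) / 4)" by simp
      also have "\<dots> = a * exp 1 ^ card (A - E)"
      proof -
        have "real (card (A - E)) - (real n - 1) / 4 = real (card (A - E)) + (- (real n - 1) / 4)"
          by linarith
        then have "exp (real (card (A - E)) - (real n - 1) / 4) = exp (real (card (A - E))) * a"
          unfolding a_def by (simp only: exp_add)
        also have "exp (real (card (A - E))) = exp 1 ^ card (A - E)"
          using exp_of_nat_mult[of "card (A - E)" 1] by simp
        finally show ?thesis by (simp only: mult.commute)
      qed
      finally have "1 \<le> a * exp 1 ^ card (A - E)" .
      then have "p ^ card E * q ^ card (A - E) \<le> (a * exp 1 ^ card (A - E)) * (p ^ card E * q ^ card (A - E))"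
        using w0 by (simp add: mult_le_cancel_right1)
      then have ineq: "p ^ card E * q ^ card (A - E) \<le> a * (p ^ card E * (exp 1 * q) ^ card (A - E))"
        by (simp only: rhs)
      have "(if even_decomposable {0..<n} E then p ^ card E * (1 - p) ^ (card A - card E) else 0)
          = p ^ card E * q ^ card (A - E)" using True cd unfolding q_def by simp
      with ineq show ?thesis by simp
    next
      case False
      have "0 \<le> a * (p ^ card E * (exp 1 * q) ^ card (A - E))"
        unfolding a_def using p0 q0 by simp
      then show ?thesis using False by simp
    qed
  qed
  have "gnp_prob n p (\<lambda>E. even_decomposable {0..<n} E)
      \<le> (\<Sum>E\<in>Pow A. a * (p ^ card E * (exp 1 * q) ^ card (A - E)))"
    unfolding gnp_prob_def A_def[symmetric] by (rule sum_mono) (rule hterm)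
  also have "\<dots> = a * (p + exp 1 * q) ^ N"
    unfolding sum_distrib_left[symmetric] pow_sum[OF finA] N_def ..
  also have "(p + exp 1 * q) ^ N \<le> exp ((exp 1 - 1) * q) ^ N"
  proof (rule power_mono)
    have "p + exp 1 * q = 1 + (exp 1 - 1) * q" unfolding q_def by (simp add: algebra_simps)
    then show "p + exp 1 * q \<le> exp ((exp 1 - 1) * q)" by simp
    show "0 \<le> p + exp 1 * q" using p0 q0 by simp
  qed
  also have "exp ((exp 1 - 1) * q) ^ N = exp (real N * ((exp 1 - 1) * q))"
    by (simp add: exp_of_nat_mult)
  also have "real N * ((exp 1 - 1) * q) \<le> real n / 5"
  proof -
    have N: "real N \<le> real n * real n" unfolding N_def A_def
      using card_all_edges by (metis of_nat_le_iff of_nat_mult)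
    have e: "exp 1 - 1 \<le> (2::real)" using exp_le by simp
    have e0: "0 \<le> exp 1 - (1::real)" by simp
    have "real N * ((exp 1 - 1) * q) \<le> (real n * real n) * (2 * (1 / (10 * real n)))"
      by (intro mult_mono N e q1 mult_nonneg_nonneg e0 q0) auto
    also have "\<dots> = real n / 5" using n by (simp add: field_simps)
    finally show ?thesis .
  qed
  then have "exp (real N * ((exp 1 - 1) * q)) \<le> exp (real n / 5)" by simp
  finally have "gnp_prob n p (\<lambda>E. even_decomposable {0..<n} E) \<le> a * exp (real n / 5)"
    unfolding a_def by simp
  also have "a * exp (real n / 5) = exp (- (real n - 1) / 4 + real n / 5)"
    unfolding a_def by (simp add: exp_add)
  also have "\<dots> \<le> exp (- (1/40) * real n)"
  proof -
    have "(10::real) \<le> real n" using n by simp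
    then have "- (real n - 1) / 4 + real n / 5 \<le> - (1/40) * real n" by (simp add: field_simps)
    then show ?thesis by simp
  qed
  finally show "gnp_prob n p (\<lambda>E. even_decomposable {0..<n} E) \<le> exp (- (1/40) * real n)" .
qed

end
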